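(* $$\sum_{n=1}^{\infty} \frac{1}{n^3 \binom{2n}{n}} = \frac{\pi\sqrt{3}}{18} \left(\psi'\!\left(\tfrac{1}{3}\right) - \psi'\!\left(\tfrac{2}{3}\right) \right) - \frac{4}{3} \zeta(3).$$
   Context: $\zeta$ denotes the Riemann zeta function; $\psi=\Gamma'/\Gamma$ is the digamma function and $\psi'$ its first derivative (the trigamma function), so $\psi'(x)=\sum_{k\ge0}(k+x)^{-2}$ for $x>0$; $\binom{2n}{n}$ is the central binomial coefficient. *)

theory Defs
  imports "HOL-Analysis.Analysis"
begin

definition zeta_nat :: "nat \<Rightarrow> real" where
  "zeta_nat s = (\<Sum>n. 1 / (real (Suc n)) ^ s)"

end

theory Submission
  imports Defs
begin


definition cb :: "nat \<Rightarrow> real" where "cb n = real ((2*n) choose n)"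
definition cf :: "nat \<Rightarrow> nat \<Rightarrow> real" where
  "cf k n = (if n = 0 then 0 else 1 / (real n ^ k * cb n))"
definition FF :: "nat \<Rightarrow> real \<Rightarrow> real" where "FF k y = (\<Sum>n. cf k n * y ^ n)"

lemma cb_fact: "cb n = fact (2*n) / (fact n * fact n)"
  unfolding cb_def by (simp add: binomial_fact mult_2)

lemma cb_rec: "cb (Suc n) * real (Suc n) = 2 * (2 * real n + 1) * cb n"
proof -
  have "2 * Suc n = Suc (Suc (2*n))" by simp
  then show ?thesis unfolding cb_fact
    by (simp add: field_simps del: of_nat_Suc) (simp add: algebra_simps)
qed

lemma cb_pos: "cb n > 0" unfolding cb_def by simp

lemma cb_ge: "cb n \<ge> 2 ^ n"
proof (induction n)
  case 0 then show ?case by (simp add: cb_def)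
next
  case (Suc n)
  have "cb (Suc n) = 2 * (2 * real n + 1) / real (Suc n) * cb n"
    using cb_rec[of n] by (simp add: field_simps del: of_nat_Suc)
  moreover have "2 * (2 * real n + 1) / real (Suc n) \<ge> 2" by (simp add: field_simps)
  ultimately have "cb (Suc n) \<ge> 2 * cb n"
    by (metis cb_pos less_eq_real_def mult_right_mono)
  with Suc show ?case by simp
qed

lemma cf_bound: "\<bar>cf k n\<bar> \<le> (1/2) ^ n"
proof (cases "n = 0")
  case False
  have "1 / (real n ^ k * cb n) \<le> 1 / cb n"
    using False cb_pos[of n] by (intro divide_left_mono) (auto simp: mult_pos_pos intro: mult_le_cancel_right1[THEN iffD2] one_le_power)
  also have "\<dots> \<le> 1 / 2 ^ n" using cb_ge[of n] cb_pos[of n] by (intro divide_left_mono) auto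
  finally show ?thesis using False cb_pos[of n] by (simp add: cf_def power_divide)
qed (simp add: cf_def)

lemma cf_summable: "\<bar>y\<bar> < 2 \<Longrightarrow> summable (\<lambda>n. cf k n * y ^ n)"
proof (rule summable_comparison_test')
  assume y: "\<bar>y\<bar> < 2"
  show "summable (\<lambda>n. (\<bar>y\<bar>/2) ^ n)" using y by (intro summable_geometric) auto
  fix n
  have "norm (cf k n * y ^ n) = \<bar>cf k n\<bar> * \<bar>y\<bar> ^ n" by (simp add: abs_mult power_abs)
  also have "\<dots> \<le> (1/2)^n * \<bar>y\<bar>^n" by (intro mult_right_mono cf_bound) auto
  finally show "norm (cf k n * y ^ n) \<le> (\<bar>y\<bar>/2) ^ n" by (simp add: power_divide)
qed

lemma diffs_cf: "diffs (cf (Suc k)) = (\<lambda>n. cf k (Suc n))"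
  by (rule ext) (simp add: diffs_def cf_def field_simps del: of_nat_Suc)

lemma FF_deriv: "\<bar>y\<bar> < 2 \<Longrightarrow> (FF (Suc k) has_field_derivative (\<Sum>n. cf k (Suc n) * y ^ n)) (at y)"
  using termdiffs_strong'[where K=2 and c="cf (Suc k)" and z=y] cf_summable
  unfolding FF_def diffs_cf by auto

lemma FF_shift: "\<bar>y\<bar> < 2 \<Longrightarrow> (\<lambda>n. cf k (Suc n) * y ^ Suc n) sums FF k y"
  using cf_summable[of y k] unfolding FF_def
  by (subst sums_Suc_iff) (simp add: summable_sums cf_def)

lemma FF_deriv_mult: "\<bar>y\<bar> < 2 \<Longrightarrow> y * (\<Sum>n. cf k (Suc n) * y ^ n) = FF k y"
proof -
  assume y: "\<bar>y\<bar> < 2"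
  have "summable (\<lambda>n. cf k (Suc n) * y ^ n)"
    using termdiff_converges[of y 2 "cf (Suc k)"] cf_summable[of _ "Suc k"] y
    unfolding diffs_cf by auto
  then have "(\<lambda>n. y * (cf k (Suc n) * y ^ n)) sums (y * (\<Sum>n. cf k (Suc n) * y ^ n))"
    by (intro sums_mult summable_sums)
  moreover have "(\<lambda>n. y * (cf k (Suc n) * y ^ n)) = (\<lambda>n. cf k (Suc n) * y ^ Suc n)"
    by (auto simp: algebra_simps)
  ultimately show ?thesis using FF_shift[OF y] sums_unique2 by metis
qed

lemma cf_summable_diff: "\<bar>y\<bar> < 2 \<Longrightarrow> summable (\<lambda>n. cf k (Suc n) * y ^ n)"
  using termdiff_converges[of y 2 "cf (Suc k)"] cf_summable[of _ "Suc k"]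
  unfolding diffs_cf by auto

lemma alg_aux:
  fixes a x :: real assumes h: "a > 0" "x \<ge> 0"
  shows "4 / ((4 * x + 6) * a / (x + 2)) - 1 / a - 2 / ((x + 2) * ((4 * x + 6) * a / (x + 2))) = 0"
proof -
  have h1: "4 * x + 6 \<noteq> 0" "x + 2 \<noteq> 0" "a \<noteq> 0" using h by auto
  have "4 / ((4 * x + 6) * a / (x + 2)) = 4 * (x + 2) / ((4 * x + 6) * a)" by simp
  moreover have "2 / ((x + 2) * ((4 * x + 6) * a / (x + 2))) = 2 / ((4 * x + 6) * a)"
    using h1 by simp
  moreover have "1 / a = (4 * x + 6) / ((4 * x + 6) * a)" using h1 by simp
  ultimately show ?thesis by (simp add: diff_divide_distrib[symmetric] algebra_simps)
qed

lemma FF1_ode: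
  assumes y: "\<bar>y\<bar> < 2"
  shows "y * (4 - y) * (\<Sum>n. cf 0 (Suc n) * y ^ n) = 2 * FF 1 y + y"
proof -
  define D where "D = (\<Sum>n. cf 0 (Suc n) * y ^ n)"
  have sD: "(\<lambda>n. cf 0 (Suc n) * y ^ n) sums D"
    unfolding D_def using cf_summable_diff[OF y] by (rule summable_sums)
  have s1: "(\<lambda>n. 4 * cf 0 (Suc n) * y ^ (Suc n)) sums (4 * y * D)"
    using sums_mult[OF sD, of "4*y"] by (simp add: algebra_simps)
  have "(\<lambda>n. cf 0 (Suc n) * y ^ (Suc (Suc n))) sums (y * y * D)"
    using sums_mult[OF sD, of "y*y"] by (simp add: algebra_simps)
  then have "(\<lambda>n. (\<lambda>n. if n = 0 then 0 else cf 0 n * y ^ (Suc n)) (Suc n)) sums (y * y * D)"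
    by simp
  then have s2: "(\<lambda>n. if n = 0 then 0 else cf 0 n * y ^ (Suc n)) sums (y * y * D)"
    using sums_Suc_iff[where f="\<lambda>n. if n = 0 then 0 else cf 0 n * y ^ (Suc n)" and s="y*y*D"] by simp
  have s3: "(\<lambda>n. 2 * (cf 1 (Suc n) * y ^ (Suc n))) sums (2 * FF 1 y)"
    by (intro sums_mult FF_shift y)
  have "(\<lambda>n. 4 * cf 0 (Suc n) * y ^ (Suc n) - (if n = 0 then 0 else cf 0 n * y ^ (Suc n))
           - 2 * (cf 1 (Suc n) * y ^ (Suc n))) sums (4 * y * D - y * y * D - 2 * FF 1 y)"
    by (intro sums_diff s1 s2 s3)
  moreover have "(\<lambda>n. 4 * cf 0 (Suc n) * y ^ (Suc n) - (if n = 0 then 0 else cf 0 n * y ^ (Suc n))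
           - 2 * (cf 1 (Suc n) * y ^ (Suc n))) = (\<lambda>n. if n = 0 then y else 0)"
  proof (rule ext)
    fix n show "4 * cf 0 (Suc n) * y ^ (Suc n) - (if n = 0 then 0 else cf 0 n * y ^ (Suc n))
           - 2 * (cf 1 (Suc n) * y ^ (Suc n)) = (if n = 0 then y else 0)"
    proof (cases n)
      case 0
      have "cb 1 = 2" by (simp add: cb_def)
      then show ?thesis using 0 by (simp add: cf_def)
    next
      case (Suc m)
      have r: "cb (Suc (Suc m)) * real (Suc (Suc m)) = 2 * (2 * real (Suc m) + 1) * cb (Suc m)"
        by (rule cb_rec)
      have p1: "cb (Suc m) > 0" "cb (Suc (Suc m)) > 0" by (simp_all add: cb_pos)
      have "4 * cf 0 (Suc n) - cf 0 n - 2 * cf 1 (Suc n) = 0"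
      proof -
        have b: "cb (Suc (Suc m)) = (4 * real m + 6) * cb (Suc m) / (real m + 2)"
          using r by (simp add: field_simps)
        have "4 * cf 0 (Suc n) - cf 0 n - 2 * cf 1 (Suc n)
              = 4 / cb (Suc (Suc m)) - 1 / cb (Suc m) - 2 / ((real m + 2) * cb (Suc (Suc m)))"
          unfolding Suc cf_def by (simp add: add.commute)
        also have "\<dots> = 0" unfolding b using p1(1) by (rule alg_aux) simp
        finally show ?thesis .
      qed
      then have "(4 * cf 0 (Suc n) - cf 0 n - 2 * cf 1 (Suc n)) * y ^ Suc n = 0" by simp
      then show ?thesis using Suc by (simp add: algebra_simps)
    qed
  qed
  ultimately have "(\<lambda>n. if n = 0 then y else 0) sums (4 * y * D - y * y * D - 2 * FF 1 y)" by simp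
  moreover have "(\<lambda>n. if n = 0 then y else 0) sums y"
    using sums_single[of 0 "\<lambda>_. y"] by simp
  ultimately have "4 * y * D - y * y * D - 2 * FF 1 y = y" using sums_unique2 by blast
  then show ?thesis unfolding D_def[symmetric] by (simp add: algebra_simps)
qed

definition gg :: "nat \<Rightarrow> real \<Rightarrow> real" where "gg k y = (\<Sum>n. cf k (Suc n) * y ^ n)"

lemma gg_isCont: "\<bar>y\<bar> < 19/10 \<Longrightarrow> isCont (gg k) y"
  unfolding gg_def by (rule isCont_powser[where K="19/10"]) (auto intro: cf_summable_diff)

lemma FF_deriv': "\<bar>y\<bar> < 2 \<Longrightarrow> (FF (Suc k) has_field_derivative gg k y) (at y)"
  unfolding gg_def by (rule FF_deriv)

lemma FF_gg: "\<bar>y\<bar> < 2 \<Longrightarrow> y * gg k y = FF k y"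
  unfolding gg_def by (rule FF_deriv_mult)

lemma small_a:
  assumes "0 \<le> a" "a \<le> pi/6"
  shows "0 \<le> 4 * sin a ^ 2" "4 * sin a ^ 2 < 16/9" "0 \<le> sin a" "sin a \<le> a"
proof -
  have "pi < 4" by (rule pi_less_4)
  have s0: "0 \<le> sin a" using assms pi_gt3 by (intro sin_ge_zero) auto
  have s1: "sin a \<le> a" using assms sin_x_le_x by auto
  have "sin a < 2/3" using s1 assms \<open>pi < 4\<close> by linarith
  then have "sin a ^ 2 < (2/3)^2" using s0 by (intro power_strict_mono) auto
  then show "4 * sin a ^ 2 < 16/9" by (simp add: power2_eq_square)
  show "0 \<le> 4 * sin a ^ 2" by simp
  show "0 \<le> sin a" "sin a \<le> a" using s0 s1 by auto
qed

lemma cos_pos_small: "0 \<le> a \<Longrightarrow> a \<le> pi/6 \<Longrightarrow> cos a > 0"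
  by (rule cos_gt_zero_pi) (use pi_gt3 in auto)


lemma F1_closed:
  assumes a: "0 \<le> a" "a \<le> pi/6"
  shows "FF 1 (4 * sin a ^ 2) * cos a = 2 * a * sin a"
proof -
  define H where "H = (\<lambda>a. 4 * sin a * cos a * gg 1 (4 * sin a ^ 2) - 2 * a)" 
  have pi6: "0 < pi/6" by simp
  have cont: "continuous_on {0..pi/6} H"
  proof (rule continuous_at_imp_continuous_on, rule ballI)
    fix x :: real assume "x \<in> {0..pi/6}"
    then have "\<bar>4 * sin x ^ 2\<bar> < 19/10" using small_a[of x] by auto
    then have "isCont (gg 1) (4 * sin x ^ 2)" by (rule gg_isCont)
    moreover have "isCont (\<lambda>x. 4 * sin x ^ 2) x" by (intro continuous_intros)
    ultimately have gc: "isCont (\<lambda>x. gg 1 (4 * sin x ^ 2)) x" using isCont_o2 by blast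
    show "isCont H x" unfolding H_def
      apply (intro continuous_intros) using gc by simp
  qed
  have der: "DERIV H x :> 0" if x: "0 < x" "x < pi/6" for x
  proof -
    define y where "y = 4 * sin x ^ 2"
    have sx: "sin x > 0" using x pi_gt3 by (intro sin_gt_zero) auto
    have cx: "cos x > 0" using x by (intro cos_pos_small) auto
    have y2: "\<bar>y\<bar> < 2" using small_a[of x] x unfolding y_def by auto
    have ode: "y * (4 - y) * gg 0 y = 2 * FF 1 y + y"
      using FF1_ode[OF y2] unfolding gg_def by simp
    have yy: "y * (4 - y) = 16 * sin x ^ 2 * cos x ^ 2"
      unfolding y_def cos_squared_eq by (simp add: algebra_simps power2_eq_square)
    have d1: "((\<lambda>a. FF 1 (4 * sin a ^ 2)) has_real_derivative gg 0 y * (8 * sin x * cos x)) (at x)"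
    proof -
      have dy: "((\<lambda>a. 4 * sin a ^ 2) has_real_derivative 8 * sin x * cos x) (at x)"
        by (auto intro!: derivative_eq_intros simp: power2_eq_square)
      have df: "(FF 1 has_real_derivative gg 0 y) (at y)"
        using FF_deriv'[OF y2, of 0] by simp
      show ?thesis using DERIV_chain2[where g="\<lambda>a. 4 * sin a ^ 2" and f="FF 1", OF df[unfolded y_def] dy]
        unfolding y_def by simp
    qed
    define H2 where "H2 = (\<lambda>a. FF 1 (4 * sin a ^ 2) * (cos a / sin a) - 2 * a)" 
    have d2: "(H2 has_real_derivative gg 0 y * (8 * sin x * cos x) * (cos x / sin x)
                 + FF 1 y * (- 1 / sin x ^ 2) - 2) (at x)"
    proof -
      have dq: "((\<lambda>a. cos a / sin a) has_real_derivative (-1 / sin x ^ 2)) (at x)"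
      proof -
        have "((\<lambda>a. cos a / sin a) has_real_derivative
               ((- sin x) * sin x - cos x * cos x) / (sin x * sin x)) (at x)"
          using sx by (intro DERIV_divide DERIV_cos DERIV_sin) auto
        moreover have e: "(- sin x) * sin x - cos x * cos x = -1"
          using sin_cos_squared_add[of x] by (simp add: power2_eq_square)
        moreover have "((- sin x) * sin x - cos x * cos x) / (sin x * sin x) = -1 / sin x ^ 2"
          unfolding e by (simp add: power2_eq_square)
        ultimately show ?thesis by simp
      qed
      have "((\<lambda>a. FF 1 (4 * sin a ^ 2) * (cos a / sin a) - 2 * a) has_real_derivative
          FF 1 (4 * sin x ^ 2) * (- 1 / sin x ^ 2) + gg 0 y * (8 * sin x * cos x) * (cos x / sin x) - 2 * 1) (at x)"
        by (intro DERIV_diff DERIV_mult' d1 dq DERIV_cmult DERIV_ident)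
      then show ?thesis unfolding H2_def y_def by (simp add: add.commute)
    qed
    have "gg 0 y * (8 * sin x * cos x) * (cos x / sin x) + FF 1 y * (- 1 / sin x ^ 2) - 2
        = (gg 0 y * (16 * sin x ^ 2 * cos x ^ 2) - 2 * FF 1 y - 4 * sin x ^ 2) / (2 * sin x ^ 2)"
      using sx by (simp add: field_simps power2_eq_square)
    also have "\<dots> = 0"
    proof -
      have "gg 0 y * (16 * sin x ^ 2 * cos x ^ 2) = 2 * FF 1 y + y" using ode yy by (metis mult.commute)
      then show ?thesis unfolding y_def by simp
    qed
    finally have d3: "(H2 has_real_derivative 0) (at x)" using d2 by simp
    show ?thesis
    proof (rule has_field_derivative_transform_within_open[OF d3, of "{0<..<pi/6}"])
      fix z assume z: "z \<in> {0<..<pi/6}"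
      have sz: "sin z > 0" using z pi_gt3 by (intro sin_gt_zero) auto
      have "\<bar>4 * sin z ^ 2\<bar> < 2" using small_a[of z] z by auto
      then have e: "FF 1 (4 * sin z ^ 2) = 4 * sin z ^ 2 * gg 1 (4 * sin z ^ 2)"
        using FF_gg[of _ 1] by simp
      show "H2 z = H z" unfolding H2_def H_def e using sz by (simp add: power2_eq_square)
    qed (use x in auto)
  qed
  have "H a = H 0" using DERIV_isconst2[OF pi6 cont der a] by auto
  then have "H a = 0" by (simp add: H_def)
  then have h: "4 * sin a * cos a * gg 1 (4 * sin a ^ 2) = 2 * a" unfolding H_def by simp
  have "\<bar>4 * sin a ^ 2\<bar> < 2" using small_a[OF a] by auto
  then have "FF 1 (4 * sin a ^ 2) = 4 * sin a ^ 2 * gg 1 (4 * sin a ^ 2)" using FF_gg[of _ 1] by simp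
  then have "FF 1 (4 * sin a ^ 2) * cos a = sin a * (4 * sin a * cos a * gg 1 (4 * sin a ^ 2))"
    by (simp add: power2_eq_square algebra_simps)
  then show ?thesis unfolding h by simp
qed


lemma FF_isCont: "\<bar>y\<bar> < 2 \<Longrightarrow> isCont (FF (Suc k)) y"
  using FF_deriv' DERIV_isCont by blast

lemma comp_deriv_FF:
  assumes x: "0 < x" "x < pi/6"
  shows "((\<lambda>a. FF (Suc k) (4 * sin a ^ 2)) has_real_derivative
           gg k (4 * sin x ^ 2) * (8 * sin x * cos x)) (at x)"
proof -
  have y2: "\<bar>4 * sin x ^ 2\<bar> < 2" using small_a[of x] x by auto
  have dy: "((\<lambda>a. 4 * sin a ^ 2) has_real_derivative 8 * sin x * cos x) (at x)"
    by (auto intro!: derivative_eq_intros simp: power2_eq_square)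
  show ?thesis using DERIV_chain2[where g="\<lambda>a. 4 * sin a ^ 2" and f="FF (Suc k)", OF FF_deriv'[OF y2] dy] .
qed

lemma comp_cont_FF: "continuous_on {0..pi/6} (\<lambda>a. FF (Suc k) (4 * sin a ^ 2))"
proof (rule continuous_at_imp_continuous_on, rule ballI)
  fix x :: real assume "x \<in> {0..pi/6}"
  then have "\<bar>4 * sin x ^ 2\<bar> < 2" using small_a[of x] by auto
  then have "isCont (FF (Suc k)) (4 * sin x ^ 2)" by (rule FF_isCont)
  moreover have "isCont (\<lambda>x. 4 * sin x ^ 2) x" by (intro continuous_intros)
  ultimately show "isCont (\<lambda>a. FF (Suc k) (4 * sin a ^ 2)) x" using isCont_o2 by blast
qed

lemma FF_zero: "FF k 0 = 0"
proof -
  have "(\<lambda>n. cf k n * 0 ^ n) = (\<lambda>n. 0 :: real)" by (auto simp: cf_def)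
  then show ?thesis unfolding FF_def by simp
qed

lemma F2_closed:
  assumes a: "0 \<le> a" "a \<le> pi/6"
  shows "FF 2 (4 * sin a ^ 2) = 2 * a ^ 2"
proof -
  define H where "H = (\<lambda>a. FF (Suc 1) (4 * sin a ^ 2) - 2 * a ^ 2)"
  have pi6: "0 < pi/6" by simp
  have cont: "continuous_on {0..pi/6} H" unfolding H_def
    by (intro continuous_intros comp_cont_FF)
  have der: "DERIV H x :> 0" if x: "0 < x" "x < pi/6" for x
  proof -
    have sx: "sin x > 0" using x pi_gt3 by (intro sin_gt_zero) auto
    have y2: "\<bar>4 * sin x ^ 2\<bar> < 2" using small_a[of x] x by auto
    have d: "(H has_real_derivative gg 1 (4 * sin x ^ 2) * (8 * sin x * cos x) - 2 * (2 * x)) (at x)"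
      unfolding H_def
      by (intro DERIV_diff comp_deriv_FF x) (auto intro!: derivative_eq_intros)
    have f1: "FF 1 (4 * sin x ^ 2) * cos x = 2 * x * sin x" using F1_closed[of x] x by auto
    have "4 * sin x ^ 2 * gg 1 (4 * sin x ^ 2) = FF 1 (4 * sin x ^ 2)" using FF_gg[OF y2] .
    then have "gg 1 (4 * sin x ^ 2) * (8 * sin x * cos x) = 2 * (FF 1 (4 * sin x ^ 2) * cos x) / sin x"
      using sx by (simp add: field_simps power2_eq_square)
    also have "\<dots> = 4 * x" unfolding f1 using sx by simp
    finally have e: "gg 1 (4 * sin x ^ 2) * (8 * sin x * cos x) = 4 * x" .
    show ?thesis using d unfolding e by simp
  qed
  have "H a = H 0" using DERIV_isconst2[OF pi6 cont der a] by auto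
  then have "FF (Suc 1) (4 * sin a ^ 2) = 2 * a ^ 2" by (simp add: H_def FF_zero)
  moreover have "Suc 1 = 2" by simp
  ultimately show ?thesis by metis
qed

lemma P_deriv:
  assumes x: "0 < x" "x < pi/6"
  shows "((\<lambda>a. FF 3 (4 * sin a ^ 2)) has_real_derivative 4 * x ^ 2 * cos x / sin x) (at x)"
proof -
  have sx: "sin x > 0" using x pi_gt3 by (intro sin_gt_zero) auto
  have y2: "\<bar>4 * sin x ^ 2\<bar> < 2" using small_a[of x] x by auto
  have d: "((\<lambda>a. FF (Suc 2) (4 * sin a ^ 2)) has_real_derivative gg 2 (4 * sin x ^ 2) * (8 * sin x * cos x)) (at x)"
    by (rule comp_deriv_FF[OF x])
  have f2: "FF 2 (4 * sin x ^ 2) = 2 * x ^ 2" using F2_closed[of x] x by auto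
  have "4 * sin x ^ 2 * gg 2 (4 * sin x ^ 2) = FF 2 (4 * sin x ^ 2)" using FF_gg[OF y2] .
  then have "gg 2 (4 * sin x ^ 2) * (8 * sin x * cos x) = 2 * FF 2 (4 * sin x ^ 2) * cos x / sin x"
    using sx by (simp add: field_simps power2_eq_square)
  also have "\<dots> = 4 * x ^ 2 * cos x / sin x" unfolding f2 by simp
  finally have e: "gg 2 (4 * sin x ^ 2) * (8 * sin x * cos x) = 4 * x ^ 2 * cos x / sin x" .
  have "Suc 2 = 3" by simp
  then show ?thesis using d unfolding e by metis
qed


definition lc :: "nat \<Rightarrow> nat \<Rightarrow> complex" where
  "lc s n = (if n = 0 then 0 else inverse (of_nat n ^ s))"
definition Li :: "nat \<Rightarrow> complex \<Rightarrow> complex" where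
  "Li s z = (\<Sum>n. lc s n * z ^ n)"

lemma norm_lc_le1: "norm (lc s n) \<le> 1"
  by (auto simp: lc_def norm_inverse norm_power intro!: inverse_le_1_iff[THEN iffD2] one_le_power)

lemma lc_summable: "s \<ge> 2 \<Longrightarrow> summable (\<lambda>n. norm (lc s n))"
proof -
  assume s: "s \<ge> 2"
  have "summable (\<lambda>n. inverse (real n ^ s))" by (rule inverse_power_summable[OF s])
  moreover have "(\<lambda>n. norm (lc s n)) = (\<lambda>n. inverse (real n ^ s))"
    using s by (auto simp: lc_def norm_inverse norm_power fun_eq_iff)
  ultimately show ?thesis by simp
qed

lemma Li_unif:
  assumes "s \<ge> 2"
  shows "uniform_limit (cball 0 1) (\<lambda>N z. \<Sum>i<N. lc s i * z ^ i) (Li s) sequentially"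
  unfolding Li_def[abs_def]
proof (rule Weierstrass_m_test_ev[OF _ lc_summable[OF assms]], rule always_eventually, safe)
  fix n and z :: complex assume "z \<in> cball 0 1"
  then have "norm z \<le> 1" by simp
  then have "norm (z ^ n) \<le> 1" by (simp add: norm_power power_le_one)
  then show "norm (lc s n * z ^ n) \<le> norm (lc s n)"
    by (simp add: norm_mult mult_left_le)
qed

lemma Li_cont: "s \<ge> 2 \<Longrightarrow> continuous_on (cball 0 1) (Li s)"
  by (rule uniform_limit_theorem[OF _ Li_unif]) (auto intro!: always_eventually continuous_intros)

lemma Li_summable_lt: "norm z < 1 \<Longrightarrow> summable (\<lambda>n. lc s n * z ^ n)"
proof (rule summable_comparison_test')
  assume z: "norm z < 1"
  show "summable (\<lambda>n. norm z ^ n)" using z by (intro summable_geometric) auto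
  fix n
  have "norm (lc s n * z ^ n) = norm (lc s n) * norm z ^ n" by (simp add: norm_mult norm_power)
  also have "\<dots> \<le> 1 * norm z ^ n" by (intro mult_right_mono norm_lc_le1) auto
  finally show "norm (lc s n * z ^ n) \<le> norm z ^ n" by simp
qed

lemma diffs_lc: "diffs (lc (Suc s)) = (\<lambda>n. lc s (Suc n))"
  by (rule ext) (simp add: diffs_def lc_def field_simps del: of_nat_Suc)

lemma Li_deriv: "norm z < 1 \<Longrightarrow> (Li (Suc s) has_field_derivative (\<Sum>n. lc s (Suc n) * z ^ n)) (at z)"
  using termdiffs_strong'[where K=1 and c="lc (Suc s)" and z=z] Li_summable_lt
  unfolding Li_def[abs_def] diffs_lc by auto

lemma Li_mult:
  assumes z: "norm z < 1"
  shows "z * (\<Sum>n. lc s (Suc n) * z ^ n) = Li s z"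
proof -
  have "summable (\<lambda>n. lc s (Suc n) * z ^ n)"
    using termdiff_converges[of z 1 "lc (Suc s)"] Li_summable_lt[of _ "Suc s"] z
    unfolding diffs_lc by auto
  then have "(\<lambda>n. z * (lc s (Suc n) * z ^ n)) sums (z * (\<Sum>n. lc s (Suc n) * z ^ n))"
    by (intro sums_mult summable_sums)
  moreover have "(\<lambda>n. z * (lc s (Suc n) * z ^ n)) = (\<lambda>n. lc s (Suc n) * z ^ Suc n)"
    by (auto simp: algebra_simps)
  moreover have "(\<lambda>n. lc s (Suc n) * z ^ Suc n) sums Li s z"
    using Li_summable_lt[OF z, of s] unfolding Li_def
    by (subst sums_Suc_iff) (simp add: summable_sums lc_def)
  ultimately show ?thesis using sums_unique2 by metis
qed

lemma Li1: "norm z < 1 \<Longrightarrow> Li 1 z = - Ln (1 - z)"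
proof -
  assume z: "norm z < 1"
  have "(\<lambda>n. - ((-(-z))^n) / of_nat n) sums ln (1 + (-z))" using Ln_series'[of "-z"] z by simp
  moreover have "(\<lambda>n. - ((-(-z))^n) / of_nat n) = (\<lambda>n. - (lc 1 n * z ^ n))"
    by (auto simp: lc_def fun_eq_iff divide_inverse mult.commute)
  ultimately have "(\<lambda>n. - (lc 1 n * z ^ n)) sums Ln (1 - z)" by simp
  then have "(\<lambda>n. lc 1 n * z ^ n) sums (- Ln (1 - z))"
    using sums_minus by fastforce
  then show ?thesis unfolding Li_def by (simp add: sums_iff)
qed


definition Zr :: "real \<Rightarrow> real \<Rightarrow> complex" where
  "Zr r a = of_real r * cis (2 * a)"

lemma norm_Zr: "r \<ge> 0 \<Longrightarrow> norm (Zr r a) = r"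
  by (simp add: Zr_def norm_mult)

lemma comp_vd:
  assumes "(f has_field_derivative f') (at (Zr r a))"
  shows "((\<lambda>t. f (Zr r t)) has_vector_derivative f' * (2 * \<i> * Zr r a)) (at a)"
proof -
  have G: "((\<lambda>w. of_real r * exp (\<i> * (2 * w))) has_field_derivative
             (of_real r * exp (\<i> * (2 * of_real a)) * (\<i> * 2))) (at (of_real a))"
    by (auto intro!: derivative_eq_intros)
  have e: "of_real r * exp (\<i> * (2 * of_real t)) = Zr r t" for t
    by (simp add: Zr_def cis_conv_exp)
  have "((\<lambda>w. f (of_real r * exp (\<i> * (2 * w)))) has_field_derivative
          f' * (of_real r * exp (\<i> * (2 * of_real a)) * (\<i> * 2))) (at (of_real a))"
    using DERIV_chain2[OF assms[folded e] G] .
  then have "((\<lambda>x. f (of_real r * exp (\<i> * (2 * of_real x)))) has_vector_derivative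
          f' * (of_real r * exp (\<i> * (2 * of_real a)) * (\<i> * 2))) (at a)"
    by (rule has_vector_derivative_real_field)
  then show ?thesis unfolding e by (simp add: algebra_simps)
qed

lemma Ln_ok: "norm (z::complex) < 1 \<Longrightarrow> 1 - z \<notin> \<real>\<^sub>\<le>\<^sub>0"
proof
  assume z: "norm z < 1" and "1 - z \<in> \<real>\<^sub>\<le>\<^sub>0"
  then have "Re (1 - z) \<le> 0" by (simp add: complex_nonpos_Reals_iff)
  moreover have "Re z < 1" using z abs_Re_le_cmod[of z] by linarith
  ultimately show False by simp
qed

lemma vd_Ln:
  assumes r: "0 \<le> r" "r < 1"
  shows "((\<lambda>t. Ln (1 - Zr r t)) has_vector_derivative
           (- inverse (1 - Zr r a)) * (2 * \<i> * Zr r a)) (at a)"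
proof (rule comp_vd)
  have n: "norm (Zr r a) < 1" using r norm_Zr by auto
  show "((\<lambda>z. Ln (1 - z)) has_field_derivative - inverse (1 - Zr r a)) (at (Zr r a))"
    using Ln_ok[OF n] by (auto intro!: derivative_eq_intros)
qed

lemma vd_Li:
  assumes r: "0 \<le> r" "r < 1"
  shows "((\<lambda>t. Li (Suc s) (Zr r t)) has_vector_derivative 2 * \<i> * Li s (Zr r a)) (at a)"
proof -
  have n: "norm (Zr r a) < 1" using r norm_Zr by auto
  have "((\<lambda>t. Li (Suc s) (Zr r t)) has_vector_derivative
          (\<Sum>n. lc s (Suc n) * Zr r a ^ n) * (2 * \<i> * Zr r a)) (at a)"
    by (rule comp_vd[OF Li_deriv[OF n]])
  also have "(\<Sum>n. lc s (Suc n) * Zr r a ^ n) * (2 * \<i> * Zr r a) = 2 * \<i> * Li s (Zr r a)"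
    using Li_mult[OF n, of s] by (simp add: algebra_simps)
  finally show ?thesis .
qed


definition EE :: "real \<Rightarrow> real \<Rightarrow> real" where
  "EE r a = 4 * a ^ 2 * Re (Ln (1 - Zr r a)) + 4 * a * Im (Li 2 (Zr r a)) + 2 * Re (Li 3 (Zr r a))"

lemma Re_V1: "Re (- inverse (1 - Z) * (2 * \<i> * Z)) = 2 * Im Z / ((1 - Re Z)^2 + (Im Z)^2)"
  by (simp add: Re_divide Im_divide power2_eq_square field_simps inverse_eq_divide)

lemma Re_Zr: "Re (Zr r a) = r * cos (2*a)" and Im_Zr: "Im (Zr r a) = r * sin (2*a)"
  by (simp_all add: Zr_def)

lemma EE_deriv:
  assumes r: "0 \<le> r" "r < 1"
  shows "(EE r has_real_derivative 8 * a ^ 2 * r * sin (2 * a) / (1 - 2 * r * cos (2 * a) + r ^ 2)) (at a)"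
proof -
  define Z where "Z = Zr r a"
  have n: "norm Z < 1" using r norm_Zr unfolding Z_def by auto
  have d1: "((\<lambda>t. Re (Ln (1 - Zr r t))) has_real_derivative Re (- inverse (1 - Z) * (2 * \<i> * Z))) (at a)"
    unfolding Z_def by (rule has_field_derivative_Re[OF vd_Ln[OF r]])
  have d2: "((\<lambda>t. Im (Li 2 (Zr r t))) has_real_derivative Im (2 * \<i> * Li 1 Z)) (at a)"
    unfolding Z_def using has_field_derivative_Im[OF vd_Li[OF r, of 1]] by (simp add: numeral_2_eq_2)
  have d3: "((\<lambda>t. Re (Li 3 (Zr r t))) has_real_derivative Re (2 * \<i> * Li 2 Z)) (at a)"
    unfolding Z_def using has_field_derivative_Re[OF vd_Li[OF r, of 2]] by (simp add: numeral_3_eq_3)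
  have da2: "((\<lambda>t. 4 * t ^ 2) has_real_derivative 8 * a) (at a)"
    by (auto intro!: derivative_eq_intros)
  have da1: "((\<lambda>t. 4 * t) has_real_derivative 4) (at a)"
    by (auto intro!: derivative_eq_intros)
  have "(EE r has_real_derivative
         (4 * a ^ 2 * Re (- inverse (1 - Z) * (2 * \<i> * Z)) + 8 * a * Re (Ln (1 - Z)))
       + (4 * a * Im (2 * \<i> * Li 1 Z) + 4 * Im (Li 2 Z))
       + 2 * Re (2 * \<i> * Li 2 Z)) (at a)"
    unfolding EE_def[abs_def] Z_def
    by (intro DERIV_add DERIV_mult' d1[unfolded Z_def] d2[unfolded Z_def] d3[unfolded Z_def] da1 da2 DERIV_cmult)
  moreover have "Li 1 Z = - Ln (1 - Z)" by (rule Li1[OF n])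
  moreover have "Re (- inverse (1 - Z) * (2 * \<i> * Z)) = 2 * r * sin (2 * a) / (1 - 2 * r * cos (2 * a) + r ^ 2)"
  proof -
    have "(1 - Re Z)^2 + (Im Z)^2 = 1 - 2 * r * cos (2 * a) + r ^ 2"
    proof -
    { fix t :: real
      have h: "(r * sin t)^2 + (r * cos t)^2 = r^2"
      proof -
        have "(r * sin t)^2 + (r * cos t)^2 = r^2 * (sin t ^2 + cos t ^2)"
          by (simp only: power_mult_distrib distrib_left)
        then show ?thesis by simp
      qed
      have "(1 - r * cos t)^2 + (r * sin t)^2 = 1 - 2 * r * cos t + ((r * sin t)^2 + (r * cos t)^2)"
        by (simp add: power2_eq_square algebra_simps)
      then have "(1 - r * cos t)^2 + (r * sin t)^2 = 1 - 2 * r * cos t + r^2" unfolding h .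
    }
    then show ?thesis unfolding Z_def Re_Zr Im_Zr by blast
  qed
    then show ?thesis unfolding Re_V1 by (simp add: Z_def Im_Zr)
  qed
  ultimately show ?thesis
  proof (elim DERIV_cong)
    assume L: "Li 1 Z = - Ln (1 - Z)"
      and V: "Re (- inverse (1 - Z) * (2 * \<i> * Z)) = 2 * r * sin (2 * a) / (1 - 2 * r * cos (2 * a) + r\<^sup>2)"
    have i1: "Im (2 * \<i> * Li 1 Z) = -2 * Re (Ln (1 - Z))" unfolding L by simp
    have i2: "Re (2 * \<i> * Li 2 Z) = -2 * Im (Li 2 Z)" by simp
    show "4 * a\<^sup>2 * Re (- inverse (1 - Z) * (2 * \<i> * Z)) + 8 * a * Re (Ln (1 - Z)) +
          (4 * a * Im (2 * \<i> * Li 1 Z) + 4 * Im (Li 2 Z)) + 2 * Re (2 * \<i> * Li 2 Z) =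
          8 * a\<^sup>2 * r * sin (2 * a) / (1 - 2 * r * cos (2 * a) + r\<^sup>2)"
      unfolding i1 i2 V by (simp add: algebra_simps)
  qed
qed


lemma sin_ge_half:
  assumes "0 \<le> x" "x \<le> pi/3"
  shows "x / 2 \<le> sin x"
proof -
  have "(\<lambda>t. sin t - t / 2) 0 \<le> (\<lambda>t. sin t - t / 2) x"
  proof (rule DERIV_nonneg_imp_nondecreasing[OF assms(1)])
    fix t assume t: "0 \<le> t" "t \<le> x"
    have "cos (pi/3) \<le> cos t" using t assms by (intro cos_monotone_0_pi_le) auto
    then have "cos t - 1/2 \<ge> 0" by (simp add: cos_60)
    moreover have "((\<lambda>t. sin t - t / 2) has_real_derivative cos t - 1/2) (at t)"
      by (auto intro!: derivative_eq_intros)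
    ultimately show "\<exists>y. ((\<lambda>t. sin t - t / 2) has_real_derivative y) (at t) \<and> y \<ge> 0" by blast
  qed
  then show ?thesis by simp
qed

lemma key_ineq:
  fixes x r s c :: real
  assumes s: "s > 0" "x / 2 \<le> s" and x: "x > 0" and c: "0 < c" "c \<le> 1"
    and r: "1/4 \<le> r" "r < 1"
  shows "4 * x ^ 2 * c * (1 - r)^2 / (s * ((1 - r)^2 + 4 * r * s ^ 2)) \<le> 8 * (1 - r)"
proof -
  define D where "D = (1 - r)^2 + 4 * r * s ^ 2"
  have D1: "D \<ge> (1 - r)^2 + s^2" unfolding D_def
    using r mult_right_mono[of 1 "4*r" "s^2"] by simp
  have "(1 - r)^2 + s^2 > 0" using s by (intro add_nonneg_pos) auto
  then have Dpos: "D > 0" using D1 by linarith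
  have am: "(1 - r)^2 + s^2 \<ge> 2 * (1 - r) * s"
    using sum_squares_bound[of "1 - r" s] by (simp add: power2_eq_square)
  have sx: "x ^ 2 \<le> 4 * s ^ 2"
  proof -
    have "x ^ 2 \<le> (2 * s) ^ 2" using s x by (intro power_mono) auto
    then show ?thesis by (simp add: power_mult_distrib)
  qed
  have "(1 - r) * x ^ 2 \<le> (1 - r) * (4 * s ^ 2)" using sx r by (intro mult_left_mono) auto
  also have "\<dots> = 2 * s * (2 * (1 - r) * s)" by (simp add: power2_eq_square)
  also have "\<dots> \<le> 2 * s * ((1 - r)^2 + s^2)" using am s by (intro mult_left_mono) auto
  also have "\<dots> \<le> 2 * s * D" using D1 s by (intro mult_left_mono) auto
  finally have main: "(1 - r) * x ^ 2 \<le> 2 * s * D" .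
  have "4 * x ^ 2 * c * (1 - r)^2 \<le> 4 * x ^ 2 * 1 * (1 - r)^2"
    using c by (intro mult_right_mono mult_left_mono) auto
  also have "\<dots> = 4 * (1 - r) * ((1 - r) * x ^ 2)" by (simp add: power2_eq_square)
  also have "\<dots> \<le> 4 * (1 - r) * (2 * s * D)" using main r by (intro mult_left_mono) auto
  also have "\<dots> = 8 * (1 - r) * (s * D)" by simp
  finally have "4 * x ^ 2 * c * (1 - r)^2 \<le> 8 * (1 - r) * (s * D)" .
  moreover have "s * D > 0" using s Dpos by simp
  ultimately show ?thesis unfolding D_def[symmetric] by (simp add: pos_divide_le_eq)
qed

lemma deriv_diff_bound:
  assumes x: "0 < x" "x < pi/6" and r: "1/4 \<le> r" "r < 1"
  shows "\<bar>8 * x ^ 2 * r * sin (2 * x) / (1 - 2 * r * cos (2 * x) + r ^ 2) - 4 * x ^ 2 * cos x / sin x\<bar>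
           \<le> 8 * (1 - r)"
proof -
  define s c where "s = sin x" and "c = cos x"
  have s: "s > 0" unfolding s_def using x pi_gt3 by (intro sin_gt_zero) auto
  have sx: "x / 2 \<le> s" unfolding s_def using x by (intro sin_ge_half) auto
  have c: "c > 0" "c \<le> 1" unfolding c_def using x cos_pos_small[of x] by auto
  have sc: "s^2 + c^2 = 1" unfolding s_def c_def by simp
  have D: "1 - 2 * r * cos (2 * x) + r ^ 2 = (1 - r)^2 + 4 * r * s ^ 2"
    unfolding cos_double_sin s_def by (simp add: power2_eq_square algebra_simps)
  have "4 * r * s ^ 2 > 0" using s r by simp
  then have Dpos: "(1 - r)^2 + 4 * r * s ^ 2 > 0" by (intro add_nonneg_pos) auto
  have e: "8 * x ^ 2 * r * sin (2 * x) / (1 - 2 * r * cos (2 * x) + r ^ 2) - 4 * x ^ 2 * cos x / sin x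
        = - (4 * x ^ 2 * c * (1 - r)^2 / (s * ((1 - r)^2 + 4 * r * s ^ 2)))"
  proof -
    define D where "D = (1 - r)^2 + 4 * r * s ^ 2"
    have "8 * x ^ 2 * r * (2 * s * c) / D - 4 * x ^ 2 * c / s
        = (8 * x ^ 2 * r * (2 * s * c) * s - 4 * x ^ 2 * c * D) / (D * s)"
      using s Dpos unfolding D_def by (intro diff_frac_eq) auto
    also have "8 * x ^ 2 * r * (2 * s * c) * s - 4 * x ^ 2 * c * D = - (4 * x ^ 2 * c * (1 - r)^2)"
      unfolding D_def by algebra
    finally show ?thesis unfolding D sin_double s_def[symmetric] c_def[symmetric] D_def[symmetric]
      by (simp add: mult.commute)
  qed
  have nn: "4 * x ^ 2 * c * (1 - r)^2 / (s * ((1 - r)^2 + 4 * r * s ^ 2)) \<ge> 0"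
    using s c Dpos by (intro divide_nonneg_pos mult_nonneg_nonneg mult_pos_pos) auto
  show ?thesis unfolding e abs_minus_cancel abs_of_nonneg[OF nn] by (rule key_ineq[OF s sx x(1) c r])
qed


lemma EE_cont: "0 \<le> r \<Longrightarrow> r < 1 \<Longrightarrow> continuous_on S (EE r)"
  by (rule continuous_at_imp_continuous_on) (use EE_deriv DERIV_isCont in blast)

lemma compare:
  assumes r: "1/4 \<le> r" "r < 1"
  shows "\<bar>(EE r (pi/6) - EE r 0) - FF 3 1\<bar> \<le> 8 * (1 - r) * (pi/6)"
proof -
  have r0: "0 \<le> r" using r by simp
  define Q where "Q = (\<lambda>a. EE r a - FF (Suc 2) (4 * sin a ^ 2))"
  have pi6: "0 < pi/6" by simp
  have cont: "continuous_on {0..pi/6} Q" unfolding Q_def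
    by (intro continuous_on_diff EE_cont[OF r0 r(2)] comp_cont_FF)
  have dQ: "(Q has_real_derivative
      8 * x ^ 2 * r * sin (2 * x) / (1 - 2 * r * cos (2 * x) + r ^ 2) - 4 * x ^ 2 * cos x / sin x) (at x)"
    if x: "0 < x" "x < pi/6" for x
  proof -
    have "Suc 2 = 3" by simp
    then show ?thesis unfolding Q_def using P_deriv[OF x]
      by (intro DERIV_diff EE_deriv[OF r0 r(2)]) simp
  qed
  obtain l z where z: "0 < z" "z < pi/6" and dz: "DERIV Q z :> l" and eq: "Q (pi/6) - Q 0 = (pi/6 - 0) * l"
    using MVT[OF pi6 cont] dQ real_differentiable_def by blast
  have l: "l = 8 * z ^ 2 * r * sin (2 * z) / (1 - 2 * r * cos (2 * z) + r ^ 2) - 4 * z ^ 2 * cos z / sin z"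
    using DERIV_unique[OF dz dQ[OF z]] .
  have lb: "\<bar>l\<bar> \<le> 8 * (1 - r)" unfolding l by (rule deriv_diff_bound[OF z r])
  have Q6: "Q (pi/6) = EE r (pi/6) - FF 3 1"
    unfolding Q_def sin_30 by (simp add: numeral_3_eq_3 power2_eq_square)
  have Q0: "Q 0 = EE r 0" unfolding Q_def by (simp add: FF_zero)
  have e: "(EE r (pi/6) - EE r 0) - FF 3 1 = Q (pi/6) - Q 0" unfolding Q6 Q0 by simp
  also have "\<dots> = pi/6 * l" using eq by simp
  finally have e2: "(EE r (pi/6) - EE r 0) - FF 3 1 = pi/6 * l" .
  have "\<bar>(EE r (pi/6) - EE r 0) - FF 3 1\<bar> = pi/6 * \<bar>l\<bar>" unfolding e2 by (simp add: abs_mult)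
  also have "\<dots> \<le> pi/6 * (8 * (1 - r))" using lb by (intro mult_left_mono) auto
  finally show ?thesis by (simp add: algebra_simps)
qed

definition om :: complex where "om = cis (pi/3)"

lemma Zr6: "Zr r (pi/6) = of_real r * om" by (simp add: Zr_def om_def)
lemma Zr0: "Zr r 0 = of_real r" by (simp add: Zr_def)

lemma norm_om: "norm om = 1" by (simp add: om_def)
lemma om_eq: "om = Complex (1/2) (sqrt 3 / 2)"
  by (simp add: om_def cis.ctr cos_60 sin_60)
lemma norm_1_om: "norm (1 - om) = 1"
proof -
  have "1 - om = Complex (1/2) (- (sqrt 3 / 2))" by (simp add: om_eq complex_eq_iff)
  then show ?thesis by (simp add: cmod_def power_divide)
qed

lemma main_limit:
  "FF 3 1 = 4 * (pi/6) * Im (Li 2 om) + 2 * Re (Li 3 om) - 2 * Re (Li 3 1)"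
proof -
  define t where "t n = inverse (4 + real n)" for n
  define rr where "rr n = 1 - t n" for n
  have t0: "t \<longlonglongrightarrow> 0" unfolding t_def
    by (intro tendsto_inverse_0_at_top filterlim_tendsto_add_at_top[OF tendsto_const filterlim_real_sequentially])
  have rr1: "rr \<longlonglongrightarrow> 1" unfolding rr_def using tendsto_diff[OF tendsto_const t0, of 1] by simp
  have tpos: "0 < t n" "t n \<le> 1/4" for n unfolding t_def by (auto simp: field_simps)
  have rrb: "1/4 \<le> rr n" "rr n < 1" for n unfolding rr_def using tpos[of n] by auto
  have lim_om: "(\<lambda>n. of_real (rr n) * om) \<longlonglongrightarrow> om"
    using tendsto_mult[OF tendsto_of_real[OF rr1] tendsto_const, of om] by simp
  have lim_1: "(\<lambda>n. of_real (rr n) :: complex) \<longlonglongrightarrow> 1"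
    using tendsto_of_real[OF rr1] by simp
  have inb: "of_real (rr n) * om \<in> cball 0 1" "(of_real (rr n) :: complex) \<in> cball 0 1" for n
    using rrb[of n] by (auto simp: norm_mult norm_om)
  have om_in: "om \<in> cball 0 1" "(1::complex) \<in> cball 0 1" by (auto simp: norm_om)
  have L2: "(\<lambda>n. Li 2 (of_real (rr n) * om)) \<longlonglongrightarrow> Li 2 om"
    using continuous_on_tendsto_compose[OF Li_cont lim_om om_in(1)] inb by (auto simp: o_def)
  have L3: "(\<lambda>n. Li 3 (of_real (rr n) * om)) \<longlonglongrightarrow> Li 3 om"
    using continuous_on_tendsto_compose[OF Li_cont lim_om om_in(1)] inb by (auto simp: o_def)
  have L31: "(\<lambda>n. Li 3 (of_real (rr n))) \<longlonglongrightarrow> Li 3 1"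
    using continuous_on_tendsto_compose[OF Li_cont lim_1 om_in(2)] inb by (auto simp: o_def)
  have LL: "(\<lambda>n. Re (Ln (1 - of_real (rr n) * om))) \<longlonglongrightarrow> 0"
  proof -
    have ne: "1 - of_real (rr n) * om \<noteq> 0" for n
    proof
      assume "1 - of_real (rr n) * om = 0"
      then have "norm (of_real (rr n) * om) = 1" by (metis eq_iff_diff_eq_0 norm_one)
      then show False using rrb[of n] by (simp add: norm_mult norm_om)
    qed
    have "(\<lambda>n. ln (norm (1 - of_real (rr n) * om))) \<longlonglongrightarrow> ln (norm (1 - om))"
      by (intro tendsto_ln tendsto_norm tendsto_diff tendsto_const lim_om) (simp add: norm_1_om)
    then show ?thesis using ne by (simp add: norm_1_om)
  qed
  define V where "V = 4 * (pi/6) * Im (Li 2 om) + 2 * Re (Li 3 om) - 2 * Re (Li 3 1)"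
  have EEeq: "EE (rr n) (pi/6) - EE (rr n) 0 =
      4 * (pi/6)^2 * Re (Ln (1 - of_real (rr n) * om)) + 4 * (pi/6) * Im (Li 2 (of_real (rr n) * om))
      + 2 * Re (Li 3 (of_real (rr n) * om)) - 2 * Re (Li 3 (of_real (rr n)))" for n
    unfolding EE_def Zr6 Zr0 by simp
  have limE: "(\<lambda>n. EE (rr n) (pi/6) - EE (rr n) 0) \<longlonglongrightarrow> V"
  proof -
    have "(\<lambda>n. 4 * (pi/6)^2 * Re (Ln (1 - of_real (rr n) * om)) + 4 * (pi/6) * Im (Li 2 (of_real (rr n) * om))
      + 2 * Re (Li 3 (of_real (rr n) * om)) - 2 * Re (Li 3 (of_real (rr n))))
      \<longlonglongrightarrow> 4 * (pi/6)^2 * 0 + 4 * (pi/6) * Im (Li 2 om) + 2 * Re (Li 3 om) - 2 * Re (Li 3 1)"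
      by (intro tendsto_intros LL L2 L3 L31)
    then show ?thesis unfolding EEeq V_def by simp
  qed
  have limB: "(\<lambda>n. 8 * (1 - rr n) * (pi/6)) \<longlonglongrightarrow> 8 * (1 - 1) * (pi/6)"
    by (intro tendsto_intros rr1)
  have "(\<lambda>n. (EE (rr n) (pi/6) - EE (rr n) 0) - FF 3 1) \<longlonglongrightarrow> 0"
  proof (rule tendsto_sandwich[where f="\<lambda>n. - (8 * (1 - rr n) * (pi/6))" and h="\<lambda>n. 8 * (1 - rr n) * (pi/6)"])
    have cmp: "\<bar>(EE (rr n) (pi/6) - EE (rr n) 0) - FF 3 1\<bar> \<le> 8 * (1 - rr n) * (pi/6)" for n
      using compare[OF rrb] .
    show "\<forall>\<^sub>F n in sequentially. - (8 * (1 - rr n) * (pi/6)) \<le> (EE (rr n) (pi/6) - EE (rr n) 0) - FF 3 1"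
    proof (intro always_eventually allI)
      fix n show "- (8 * (1 - rr n) * (pi/6)) \<le> (EE (rr n) (pi/6) - EE (rr n) 0) - FF 3 1"
        using cmp[of n] by linarith
    qed
    show "\<forall>\<^sub>F n in sequentially. (EE (rr n) (pi/6) - EE (rr n) 0) - FF 3 1 \<le> 8 * (1 - rr n) * (pi/6)"
    proof (intro always_eventually allI)
      fix n show "(EE (rr n) (pi/6) - EE (rr n) 0) - FF 3 1 \<le> 8 * (1 - rr n) * (pi/6)"
        using cmp[of n] by linarith
    qed
    show "(\<lambda>n. - (8 * (1 - rr n) * (pi/6))) \<longlonglongrightarrow> 0" using tendsto_minus[OF limB] by simp
    show "(\<lambda>n. 8 * (1 - rr n) * (pi/6)) \<longlonglongrightarrow> 0" using limB by simp
  qed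
  moreover have "(\<lambda>n. (EE (rr n) (pi/6) - EE (rr n) 0) - FF 3 1) \<longlonglongrightarrow> V - FF 3 1"
    by (intro tendsto_intros limE)
  ultimately have "V - FF 3 1 = 0" using LIMSEQ_unique by blast
  then show ?thesis unfolding V_def by simp
qed


lemma sum6: "(\<Sum>k\<in>{(a::nat)..<a+6}. f k) = f a + f (a+1) + f (a+2) + f (a+3) + f (a+4) + (f (a+5) :: 'a::comm_monoid_add)"
proof -
  have "{a..<a+6} = {a, a+1, a+2, a+3, a+4, a+5}" by auto
  then show ?thesis by (simp add: add_ac)
qed
lemma sum3: "(\<Sum>k\<in>{(a::nat)..<a+3}. f k) = f a + f (a+1) + (f (a+2) :: 'a::comm_monoid_add)"
proof -
  have "{a..<a+3} = {a, a+1, a+2}" by auto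
  then show ?thesis by (simp add: add_ac)
qed
lemma sum2: "(\<Sum>k\<in>{(a::nat)..<a+2}. f k) = f a + (f (a+1) :: 'a::comm_monoid_add)"
proof -
  have "{a..<a+2} = {a, a+1}" by auto
  then show ?thesis by (simp add: add_ac)
qed

definition omc :: complex where "omc = Complex (1/2) (sqrt 3 / 2)"

lemma Re_omc: "Re omc = 1/2" and Im_omc: "Im omc = sqrt 3 / 2" by (simp_all add: omc_def)

lemma s33: "sqrt 3 * sqrt 3 = (3::real)" by simp

lemma omc2: "omc ^ 2 = Complex (-1/2) (sqrt 3 / 2)"
  by (simp add: omc_def power2_eq_square complex_eq_iff s33)
lemma omc3: "omc ^ 3 = -1"
proof -
  have "omc ^ 3 = omc ^ 2 * omc" by (simp add: power_Suc2 numeral_3_eq_3 power2_eq_square)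
  then show ?thesis unfolding omc2 by (simp add: omc_def complex_eq_iff s33)
qed
lemma omc4: "omc ^ 4 = Complex (-1/2) (- (sqrt 3 / 2))"
proof -
  have "omc ^ 4 = omc ^ 3 * omc" by (simp add: power_Suc2 numeral_eq_Suc)
  then show ?thesis unfolding omc3 by (simp add: omc_def complex_eq_iff)
qed
lemma omc5: "omc ^ 5 = Complex (1/2) (- (sqrt 3 / 2))"
proof -
  have "omc ^ 5 = omc ^ 3 * omc ^ 2" by (simp add: power_add[symmetric])
  then show ?thesis unfolding omc3 omc2 by (simp add: complex_eq_iff)
qed
lemma omc6: "omc ^ 6 = 1"
proof -
  have "omc ^ 6 = omc ^ 3 * omc ^ 3" by (simp add: power_add[symmetric])
  then show ?thesis unfolding omc3 by simp
qed
lemma omc_per: "omc ^ (m * 6 + j) = omc ^ j"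
  by (simp add: power_add power_mult omc6 mult.commute[of m])

lemma lc_real: "lc s n = of_real (if n = 0 then 0 else 1 / real n ^ s)"
  by (simp add: lc_def divide_inverse)

lemma Li_sums_shift:
  assumes "s \<ge> 2" "norm z \<le> 1"
  shows "(\<lambda>k. lc s (Suc k) * z ^ Suc k) sums Li s z"
proof -
  have "summable (\<lambda>n. lc s n * z ^ n)"
  proof (rule summable_norm_cancel, rule summable_comparison_test'[OF lc_summable[OF assms(1)]])
    fix n
    have "norm (z ^ n) \<le> 1" using assms(2) by (simp add: norm_power power_le_one)
    then show "norm (norm (lc s n * z ^ n)) \<le> norm (lc s n)"
      by (simp add: norm_mult mult_left_le)
  qed
  then show ?thesis unfolding Li_def by (subst sums_Suc_iff) (simp add: summable_sums lc_def)
qed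

lemma Li_block:
  assumes "s \<ge> 2"
  shows "(\<lambda>m. of_real (1 / (6 * real m + 1) ^ s) * omc + of_real (1 / (6 * real m + 2) ^ s) * omc ^ 2
             + of_real (1 / (6 * real m + 3) ^ s) * omc ^ 3 + of_real (1 / (6 * real m + 4) ^ s) * omc ^ 4
             + of_real (1 / (6 * real m + 5) ^ s) * omc ^ 5 + of_real (1 / (6 * real m + 6) ^ s) * omc ^ 6)
         sums Li s omc"
proof -
  have no: "norm omc \<le> 1" by (simp add: omc_def cmod_def power_divide)
  have g: "(\<lambda>m. \<Sum>k\<in>{m * 6..<m * 6 + 6}. lc s (Suc k) * omc ^ Suc k) sums Li s omc"
    by (rule sums_group[OF Li_sums_shift[OF assms no]]) simp
  have e: "(\<Sum>k\<in>{m * 6..<m * 6 + 6}. lc s (Suc k) * omc ^ Suc k) =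
     of_real (1 / (6 * real m + 1) ^ s) * omc + of_real (1 / (6 * real m + 2) ^ s) * omc ^ 2
             + of_real (1 / (6 * real m + 3) ^ s) * omc ^ 3 + of_real (1 / (6 * real m + 4) ^ s) * omc ^ 4
             + of_real (1 / (6 * real m + 5) ^ s) * omc ^ 5 + of_real (1 / (6 * real m + 6) ^ s) * omc ^ 6" for m
  proof -
    have *: "lc s (Suc (m * 6 + j)) * omc ^ Suc (m * 6 + j) = of_real (1 / (6 * real m + real (Suc j)) ^ s) * omc ^ Suc j" for j
    proof -
      have "Suc (m * 6 + j) = m * 6 + Suc j" by simp
      then have "omc ^ Suc (m * 6 + j) = omc ^ Suc j" using omc_per[of m "Suc j"] by simp
      moreover have r: "real (Suc (m * 6 + j)) = 6 * real m + real (Suc j)" by simp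
      moreover have "lc s (Suc (m * 6 + j)) = of_real (1 / real (Suc (m * 6 + j)) ^ s)"
        unfolding lc_real by (simp only: nat.distinct if_False)
      ultimately show ?thesis by (simp only: r)
    qed
    show ?thesis unfolding sum6 using *[of 0] *[of 1] *[of 2] *[of 3] *[of 4] *[of 5]
      by (simp add: numeral_eq_Suc add_ac)
  qed
  show ?thesis using g unfolding e .
qed

lemma zeta_sums: "(\<lambda>k. 1 / real (Suc k) ^ 3) sums zeta_nat 3"
proof -
  have "summable (\<lambda>n. inverse (real n ^ 3))" by (rule inverse_power_summable) simp
  then have "summable (\<lambda>n. inverse (real (n + 1) ^ 3))" by (rule summable_ignore_initial_segment)
  then have "summable (\<lambda>k. 1 / real (Suc k) ^ 3)" by (simp add: divide_inverse)
  then show ?thesis unfolding zeta_nat_def by (rule summable_sums)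
qed

lemma zeta_block:
  fixes A :: real and c :: real and d :: nat
  assumes "d > 0" "\<And>m i. i < d \<Longrightarrow> 1 / real (Suc (m * d + i)) ^ 3 / c = g m i"
  shows "(\<lambda>m. \<Sum>i<d. g m i) sums (zeta_nat 3 / c)"
proof -
  have "(\<lambda>k. 1 / real (Suc k) ^ 3 / c) sums (zeta_nat 3 / c)" by (rule sums_divide[OF zeta_sums])
  from sums_group[OF this assms(1)]
  have "(\<lambda>m. \<Sum>k\<in>{m * d..<m * d + d}. 1 / real (Suc k) ^ 3 / c) sums (zeta_nat 3 / c)" .
  moreover have "(\<Sum>k\<in>{m * d..<m * d + d}. 1 / real (Suc k) ^ 3 / c) = (\<Sum>i<d. g m i)" for m
  proof -
    have "(\<Sum>k\<in>{m * d..<m * d + d}. 1 / real (Suc k) ^ 3 / c) = (\<Sum>i<d. 1 / real (Suc (m * d + i)) ^ 3 / c)"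
      by (subst sum.shift_bounds_nat_ivl[of _ 0 "m*d" d, simplified add.commute[of _ "m*d"], simplified])
         (simp add: lessThan_atLeast0 add.commute)
    also have "\<dots> = (\<Sum>i<d. g m i)" using assms(2) by (intro sum.cong) auto
    finally show ?thesis .
  qed
  ultimately show ?thesis by simp
qed

lemma inv_cube_eq: "y = c * x \<Longrightarrow> 1 / x ^ 3 / c ^ 3 = 1 / (y::real) ^ 3"
  by (simp add: power_mult_distrib)

lemma Re_block: "Re (of_real x1 * omc + of_real x2 * omc ^ 2 + of_real x3 * omc ^ 3 + of_real x4 * omc ^ 4
   + of_real x5 * omc ^ 5 + of_real x6 * omc ^ 6) = x1/2 - x2/2 - x3 - x4/2 + x5/2 + x6"
  by (simp add: omc2 omc3 omc4 omc5 omc6 Re_omc)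

lemma Im_block: "Im (of_real x1 * omc + of_real x2 * omc ^ 2 + of_real x3 * omc ^ 3 + of_real x4 * omc ^ 4
   + of_real x5 * omc ^ 5 + of_real x6 * omc ^ 6) = sqrt 3 / 2 * (x1 + x2 - x4 - x5)"
  by (simp add: omc2 omc3 omc4 omc5 omc6 Im_omc algebra_simps)

lemma lin6: "(x1::real)/2 - x2/2 - x3 - x4/2 + x5/2 + x6 =
   1/2 * (x1 + x2 + x3 + x4 + x5 + x6) - (x2 + x4 + x6) - 3/2 * (x3 + x6) + 3 * x6"
  by (simp add: field_simps)

lemma Re_Li3_om: "Re (Li 3 omc) = zeta_nat 3 / 3"
proof -
  define b where "b m j = 1 / (6 * real m + j) ^ 3" for m :: nat and j :: real
  have G1: "(\<lambda>m. b m 1 + b m 2 + b m 3 + b m 4 + b m 5 + b m 6) sums (zeta_nat 3 / 1)"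
  proof -
    have "(\<lambda>m. \<Sum>i<6. b m (real i + 1)) sums (zeta_nat 3 / 1)"
      by (rule zeta_block) (auto simp: b_def algebra_simps)
    then show ?thesis by (simp add: numeral_eq_Suc add_ac)
  qed
  have G2: "(\<lambda>m. b m 2 + b m 4 + b m 6) sums (zeta_nat 3 / 2 ^ 3)"
  proof -
    have "(\<lambda>m. \<Sum>i<3. b m (2 * real i + 2)) sums (zeta_nat 3 / 2 ^ 3)"
      by (rule zeta_block) (simp, unfold b_def, rule inv_cube_eq, simp add: algebra_simps)
    then show ?thesis by (simp add: numeral_eq_Suc add_ac)
  qed
  have G3: "(\<lambda>m. b m 3 + b m 6) sums (zeta_nat 3 / 3 ^ 3)"
  proof -
    have "(\<lambda>m. \<Sum>i<2. b m (3 * real i + 3)) sums (zeta_nat 3 / 3 ^ 3)"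
      by (rule zeta_block) (simp, unfold b_def, rule inv_cube_eq, simp add: algebra_simps)
    then show ?thesis by (simp add: numeral_eq_Suc add_ac)
  qed
  have G4: "(\<lambda>m. b m 6) sums (zeta_nat 3 / 6 ^ 3)"
  proof -
    have "(\<lambda>k. 1 / real (Suc k) ^ 3 / 6 ^ 3) sums (zeta_nat 3 / 6 ^ 3)" by (rule sums_divide[OF zeta_sums])
    moreover have "1 / real (Suc k) ^ 3 / 6 ^ 3 = b k 6" for k
      unfolding b_def by (rule inv_cube_eq) (simp add: algebra_simps)
    ultimately show ?thesis by simp
  qed
  have comb: "(\<lambda>m. 1/2 * (b m 1 + b m 2 + b m 3 + b m 4 + b m 5 + b m 6) - (b m 2 + b m 4 + b m 6)
       - 3/2 * (b m 3 + b m 6) + 3 * b m 6) sums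
      (1/2 * (zeta_nat 3 / 1) - zeta_nat 3 / 2 ^ 3 - 3/2 * (zeta_nat 3 / 3 ^ 3) + 3 * (zeta_nat 3 / 6 ^ 3))"
    by (intro sums_add sums_diff sums_mult G1 G2 G3 G4)
  have blk: "(\<lambda>m. Re (of_real (1 / (6 * real m + 1) ^ 3) * omc + of_real (1 / (6 * real m + 2) ^ 3) * omc ^ 2
             + of_real (1 / (6 * real m + 3) ^ 3) * omc ^ 3 + of_real (1 / (6 * real m + 4) ^ 3) * omc ^ 4
             + of_real (1 / (6 * real m + 5) ^ 3) * omc ^ 5 + of_real (1 / (6 * real m + 6) ^ 3) * omc ^ 6))
         sums Re (Li 3 omc)"
    using Li_block[of 3] by (simp add: sums_complex_iff)
  have "(\<lambda>m. Re (of_real (1 / (6 * real m + 1) ^ 3) * omc + of_real (1 / (6 * real m + 2) ^ 3) * omc ^ 2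
             + of_real (1 / (6 * real m + 3) ^ 3) * omc ^ 3 + of_real (1 / (6 * real m + 4) ^ 3) * omc ^ 4
             + of_real (1 / (6 * real m + 5) ^ 3) * omc ^ 5 + of_real (1 / (6 * real m + 6) ^ 3) * omc ^ 6))
      = (\<lambda>m. 1/2 * (b m 1 + b m 2 + b m 3 + b m 4 + b m 5 + b m 6) - (b m 2 + b m 4 + b m 6)
       - 3/2 * (b m 3 + b m 6) + 3 * b m 6)"
  proof (rule ext)
    fix m
    show "Re (of_real (1 / (6 * real m + 1) ^ 3) * omc + of_real (1 / (6 * real m + 2) ^ 3) * omc ^ 2
             + of_real (1 / (6 * real m + 3) ^ 3) * omc ^ 3 + of_real (1 / (6 * real m + 4) ^ 3) * omc ^ 4
             + of_real (1 / (6 * real m + 5) ^ 3) * omc ^ 5 + of_real (1 / (6 * real m + 6) ^ 3) * omc ^ 6)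
      = 1/2 * (b m 1 + b m 2 + b m 3 + b m 4 + b m 5 + b m 6) - (b m 2 + b m 4 + b m 6)
       - 3/2 * (b m 3 + b m 6) + 3 * b m 6"
      unfolding b_def[symmetric] Re_block by (rule lin6)
  qed
  with blk have blk': "(\<lambda>m. 1/2 * (b m 1 + b m 2 + b m 3 + b m 4 + b m 5 + b m 6) - (b m 2 + b m 4 + b m 6)
       - 3/2 * (b m 3 + b m 6) + 3 * b m 6) sums Re (Li 3 omc)" by simp
  have "Re (Li 3 omc) = 1/2 * (zeta_nat 3 / 1) - zeta_nat 3 / 2 ^ 3 - 3/2 * (zeta_nat 3 / 3 ^ 3) + 3 * (zeta_nat 3 / 6 ^ 3)"
    by (rule sums_unique2[OF blk' comb])
  then show ?thesis by simp
qed


lemma PG0: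
  assumes a: "(a::real) > 0"
  shows "(\<lambda>k. inverse ((a / 3 + of_nat k) ^ Suc 1)) sums ((-1) ^ Suc 1 * Polygamma 1 (a / 3) / fact 1)"
proof (rule Polygamma_LIMSEQ)
  show "a / 3 \<noteq> 0" using a by simp
qed simp

lemma inv_sq_eq: "y = c * x \<Longrightarrow> 1 / x ^ 2 / c ^ 2 = 1 / (y::real) ^ 2"
  by (simp add: power_mult_distrib)

lemma PG_sums:
  assumes a: "(a::real) > 0"
  shows "(\<lambda>k. 1 / (3 * real k + a) ^ 2) sums (Polygamma 1 (a / 3) / 3 ^ 2)"
proof -
  have e1: "((-1::real) ^ Suc 1 * Polygamma 1 (a / 3) / fact 1) = Polygamma 1 (a / 3)" by simp
  have e2: "inverse ((a / 3 + of_nat k) ^ Suc 1) = 1 / (a / 3 + real k) ^ 2" for k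
    by (simp add: inverse_eq_divide power2_eq_square)
  have "(\<lambda>k. 1 / (a / 3 + real k) ^ 2) sums Polygamma 1 (a / 3)"
    using PG0[OF a] unfolding e1 e2 .
  then have "(\<lambda>k. 1 / (a / 3 + real k) ^ 2 / 3 ^ 2) sums (Polygamma 1 (a / 3) / 3 ^ 2)"
    by (rule sums_divide)
  moreover have "1 / (a / 3 + real k) ^ 2 / 3 ^ 2 = 1 / (3 * real k + a) ^ 2" for k
    by (rule inv_sq_eq) (simp add: algebra_simps)
  ultimately show ?thesis by simp
qed

lemma lin4: "sqrt 3 / 2 * ((x1::real) + x2 - x4 - x5) = sqrt 3 / 2 * ((x1 - x2 + x4 - x5) + 2 * (x2 - x4))"
  by (simp add: algebra_simps)

lemma Im_Li2_om: "Im (Li 2 omc) = sqrt 3 / 12 * (Polygamma 1 (1/3) - Polygamma 1 (2/3))"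
proof -
  define c where "c m j = 1 / (6 * real m + j) ^ 2" for m :: nat and j :: real
  define L where "L = Polygamma 1 (1/3 :: real) / 3 ^ 2 - Polygamma 1 (2/3) / 3 ^ 2"
  have p: "(\<lambda>k. 1 / (3 * real k + 1) ^ 2 - 1 / (3 * real k + 2) ^ 2) sums L"
    unfolding L_def using sums_diff[OF PG_sums[of 1] PG_sums[of 2]] by simp
  have g1: "(\<lambda>m. c m 1 - c m 2 + c m 4 - c m 5) sums L"
  proof -
    from sums_group[OF p, of 2]
    have "(\<lambda>m. \<Sum>k\<in>{m * 2..<m * 2 + 2}. 1 / (3 * real k + 1) ^ 2 - 1 / (3 * real k + 2) ^ 2) sums L"
      by simp
    moreover have "(\<Sum>k\<in>{m * 2..<m * 2 + 2}. 1 / (3 * real k + 1) ^ 2 - 1 / (3 * real k + 2) ^ 2)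
        = c m 1 - c m 2 + c m 4 - c m 5" for m
      unfolding sum2 c_def by (simp add: algebra_simps)
    ultimately show ?thesis by simp
  qed
  have g2: "(\<lambda>m. c m 2 - c m 4) sums (L / 2 ^ 2)"
  proof -
    have "(\<lambda>k. (1 / (3 * real k + 1) ^ 2 - 1 / (3 * real k + 2) ^ 2) / 2 ^ 2) sums (L / 2 ^ 2)"
      by (rule sums_divide[OF p])
    moreover have "(1 / (3 * real k + 1) ^ 2 - 1 / (3 * real k + 2) ^ 2) / 2 ^ 2 = c k 2 - c k 4" for k
    proof -
      have "1 / (3 * real k + 1) ^ 2 / 2 ^ 2 = c k 2" unfolding c_def
        by (rule inv_sq_eq) (simp add: algebra_simps)
      moreover have "1 / (3 * real k + 2) ^ 2 / 2 ^ 2 = c k 4" unfolding c_def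
        by (rule inv_sq_eq) (simp add: algebra_simps)
      ultimately show ?thesis by (simp only: diff_divide_distrib)
    qed
    ultimately show ?thesis by (simp only:)
  qed
  have comb: "(\<lambda>m. sqrt 3 / 2 * ((c m 1 - c m 2 + c m 4 - c m 5) + 2 * (c m 2 - c m 4)))
      sums (sqrt 3 / 2 * (L + 2 * (L / 2 ^ 2)))"
    by (intro sums_mult sums_add g1 g2)
  have blk: "(\<lambda>m. Im (of_real (1 / (6 * real m + 1) ^ 2) * omc + of_real (1 / (6 * real m + 2) ^ 2) * omc ^ 2
             + of_real (1 / (6 * real m + 3) ^ 2) * omc ^ 3 + of_real (1 / (6 * real m + 4) ^ 2) * omc ^ 4
             + of_real (1 / (6 * real m + 5) ^ 2) * omc ^ 5 + of_real (1 / (6 * real m + 6) ^ 2) * omc ^ 6))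
         sums Im (Li 2 omc)"
    using Li_block[of 2] by (simp add: sums_complex_iff)
  have "(\<lambda>m. Im (of_real (1 / (6 * real m + 1) ^ 2) * omc + of_real (1 / (6 * real m + 2) ^ 2) * omc ^ 2
             + of_real (1 / (6 * real m + 3) ^ 2) * omc ^ 3 + of_real (1 / (6 * real m + 4) ^ 2) * omc ^ 4
             + of_real (1 / (6 * real m + 5) ^ 2) * omc ^ 5 + of_real (1 / (6 * real m + 6) ^ 2) * omc ^ 6))
      = (\<lambda>m. sqrt 3 / 2 * ((c m 1 - c m 2 + c m 4 - c m 5) + 2 * (c m 2 - c m 4)))"
  proof (rule ext)
    fix m
    show "Im (of_real (1 / (6 * real m + 1) ^ 2) * omc + of_real (1 / (6 * real m + 2) ^ 2) * omc ^ 2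
             + of_real (1 / (6 * real m + 3) ^ 2) * omc ^ 3 + of_real (1 / (6 * real m + 4) ^ 2) * omc ^ 4
             + of_real (1 / (6 * real m + 5) ^ 2) * omc ^ 5 + of_real (1 / (6 * real m + 6) ^ 2) * omc ^ 6)
      = sqrt 3 / 2 * ((c m 1 - c m 2 + c m 4 - c m 5) + 2 * (c m 2 - c m 4))"
      unfolding c_def[symmetric] Im_block by (rule lin4)
  qed
  with blk have blk': "(\<lambda>m. sqrt 3 / 2 * ((c m 1 - c m 2 + c m 4 - c m 5) + 2 * (c m 2 - c m 4))) sums Im (Li 2 omc)"
    by simp
  have "Im (Li 2 omc) = sqrt 3 / 2 * (L + 2 * (L / 2 ^ 2))" by (rule sums_unique2[OF blk' comb])
  also have "sqrt 3 / 2 * (L + 2 * (L / 2 ^ 2)) = sqrt 3 / 2 * (3/2) * L" by (simp add: algebra_simps)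
  finally show ?thesis unfolding L_def by (simp add: field_simps)
qed

lemma Li3_1: "Re (Li 3 1) = zeta_nat 3"
proof -
  have "(\<lambda>k. lc 3 (Suc k) * 1 ^ Suc k) sums Li 3 1" by (rule Li_sums_shift) auto
  then have "(\<lambda>k. Re (lc 3 (Suc k))) sums Re (Li 3 1)" by (simp add: sums_complex_iff)
  moreover have "Re (lc 3 (Suc k)) = 1 / real (Suc k) ^ 3" for k
    unfolding lc_real by (simp only: nat.distinct if_False Re_complex_of_real)
  ultimately have "(\<lambda>k. 1 / real (Suc k) ^ 3) sums Re (Li 3 1)" by simp
  then show ?thesis using zeta_sums sums_unique2 by blast
qed


theorem mainTheorem4:
  shows "(\<lambda>n. 1 / ((real (Suc n)) ^ 3 * real ((2 * Suc n) choose (Suc n))))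
           sums (pi * sqrt 3 / 18 * (Polygamma 1 (1/3 :: real) - Polygamma 1 (2/3 :: real))
                 - 4/3 * zeta_nat 3)"
proof -
  have oo: "om = omc" unfolding om_eq omc_def ..
  have v: "FF 3 1 = pi * sqrt 3 / 18 * (Polygamma 1 (1/3 :: real) - Polygamma 1 (2/3 :: real))
                 - 4/3 * zeta_nat 3"
    unfolding main_limit oo Im_Li2_om Re_Li3_om Li3_1 by (simp add: field_simps)
  have "(\<lambda>n. cf 3 (Suc n) * 1 ^ Suc n) sums FF 3 1" by (rule FF_shift) simp
  moreover have "cf 3 (Suc n) * 1 ^ Suc n = 1 / ((real (Suc n)) ^ 3 * real ((2 * Suc n) choose (Suc n)))" for n
    by (simp add: cf_def cb_def)
  ultimately show ?thesis unfolding v by simp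
qed


end
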